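(* Let $f,g$ satisfy the standing assumptions below and suppose $\beta\ge\frac{2M_fQ_g}{\mu^3}$. Then for any $(x,y)\in\mathbb{R}^n\times\mathbb{R}^p$, $(x,y)$ is a $\mathcal{D}_h$-stationary point of (CDB) (i.e. $0\in\mathcal{D}_h(x,y)$) if and only if $0\in\hat{\mathcal{D}}_h(x,y)$.
   Context: Standing assumptions. (A1) Constants $M_f,\mu,L_g,Q_g>0$ exist such that: $f:\mathbb{R}^n\times\mathbb{R}^p\to\mathbb{R}$ is $M_f$-Lipschitz; $g$ is twice differentiable with $\nabla^2_{yy}g\succeq\mu I_p$; $\nabla g$ is $L_g$-Lipschitz; $\nabla^2_{yy}g,\nabla^2_{xy}g$ are $Q_g$-Lipschitz; $\nabla^2_{yy}g$ is continuously differentiable ($\nabla^2_{xy}g\in\mathbb{R}^{n\times p}$ has entries $\partial^2g/\partial x_i\partial y_j$). (A2) $f$ is a potential function of a conservative field $\mathcal{D}_f$ with compact convex values of norm at most $M_f$. Notation (all at $(x,y)$): $H=\nabla^2_{yy}g$; $\mathcal{A}(x,y):=y-H^{-1}\nabla_yg$; $\nabla^3_{xyy}g(x,y)[d]:=\lim_{t\to0}\frac1t(\nabla^2_{xy}g(x,y+td)-\nabla^2_{xy}g(x,y))$, $\nabla^3_{yyy}g(x,y)[d]:=\lim_{t\to0}\frac1t(\nabla^2_{yy}g(x,y+td)-\nabla^2_{yy}g(x,y))$; $J_{A,x}:=-\nabla^2_{xy}gH^{-1}+\nabla^3_{xyy}g[H^{-1}\nabla_yg]H^{-1}$, $J_{A,y}:=\nabla^3_{yyy}g[H^{-1}\nabla_yg]H^{-1}$;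 $\mathcal{D}_h(x,y):=\{(d_x+J_{A,x}d_y+\beta\nabla^2_{xy}g\nabla_yg,\ J_{A,y}d_y+\beta H\nabla_yg):(d_x,d_y)\in\mathcal{D}_f(x,\mathcal{A}(x,y))\}$; $\hat{\mathcal{D}}_h(x,y):=\{(d_x-\nabla^2_{xy}g(H^{-1}d_y-\beta\nabla_yg),\ \beta\nabla_yg):(d_x,d_y)\in\mathcal{D}_f(x,\mathcal{A}(x,y))\}$. *)

theory Defs
  imports "HOL-Analysis.Analysis"
begin

definition abs_continuous_on :: "real set \<Rightarrow> (real \<Rightarrow> 'a::real_normed_vector) \<Rightarrow> bool" where
  "abs_continuous_on S \<gamma> \<longleftrightarrow>
     (\<forall>\<epsilon>>0. \<exists>\<delta>>0. \<forall>(I::nat set) u v.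
        finite I \<and> (\<forall>k\<in>I. u k \<in> S \<and> v k \<in> S \<and> u k \<le> v k \<and> {u k..v k} \<subseteq> S) \<and>
        (\<forall>k\<in>I. \<forall>l\<in>I. k \<noteq> l \<longrightarrow> {u k<..<v k} \<inter> {u l<..<v l} = {}) \<and>
        (\<Sum>k\<in>I. v k - u k) < \<delta>
        \<longrightarrow> (\<Sum>k\<in>I. norm (\<gamma> (v k) - \<gamma> (u k))) < \<epsilon>)"

definition field_integrand :: "('a::euclidean_space \<Rightarrow> 'a set) \<Rightarrow> (real \<Rightarrow> 'a) \<Rightarrow> real \<Rightarrow> real" where
  "field_integrand D \<gamma> t = Sup ((\<lambda>v. vector_derivative \<gamma> (at t within {0..1}) \<bullet> v) ` D (\<gamma> t))"

definition conservative_field :: "('a::euclidean_space \<Rightarrow> 'a set) \<Rightarrow> bool" where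
  "conservative_field D \<longleftrightarrow>
     closed {(z, v). v \<in> D z} \<and> (\<forall>z. D z \<noteq> {} \<and> compact (D z)) \<and>
     (\<forall>\<gamma>. abs_continuous_on {0..1} \<gamma> \<and> \<gamma> 0 = \<gamma> 1 \<longrightarrow>
        (field_integrand D \<gamma> has_integral 0) {0..1})"

definition potential_of :: "('a::euclidean_space \<Rightarrow> real) \<Rightarrow> ('a \<Rightarrow> 'a set) \<Rightarrow> bool" where
  "potential_of f D \<longleftrightarrow> conservative_field D \<and>
     (\<forall>\<gamma>. abs_continuous_on {0..1} \<gamma> \<longrightarrow>
        (field_integrand D \<gamma> has_integral (f (\<gamma> 1) - f (\<gamma> 0))) {0..1})"

definition mat_norm :: "real^'m^'k \<Rightarrow> real" where
  "mat_norm M = onorm (\<lambda>v. M *v v)"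

text \<open>Gy x y = nabla_y g(x,y); Hyy x y = nabla^2_yy g(x,y) (p x p);
  Hxy x y = nabla^2_xy g(x,y) (n x p, entries d^2 g / dx_i dy_j).\<close>

definition A_map :: "(real^'n \<Rightarrow> real^'p \<Rightarrow> real^'p) \<Rightarrow> (real^'n \<Rightarrow> real^'p \<Rightarrow> real^'p^'p)
    \<Rightarrow> real^'n \<Rightarrow> real^'p \<Rightarrow> real^'p" where
  "A_map Gy Hyy x y = y - matrix_inv (Hyy x y) *v Gy x y"

definition D3xyy :: "(real^'n \<Rightarrow> real^'p \<Rightarrow> real^'p^'n) \<Rightarrow> real^'n \<Rightarrow> real^'p \<Rightarrow> real^'p \<Rightarrow> real^'p^'n" where
  "D3xyy Hxy x y d = Lim (at (0::real)) (\<lambda>t. (1 / t) *\<^sub>R (Hxy x (y + t *\<^sub>R d) - Hxy x y))"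

definition D3yyy :: "(real^'n \<Rightarrow> real^'p \<Rightarrow> real^'p^'p) \<Rightarrow> real^'n \<Rightarrow> real^'p \<Rightarrow> real^'p \<Rightarrow> real^'p^'p" where
  "D3yyy Hyy x y d = Lim (at (0::real)) (\<lambda>t. (1 / t) *\<^sub>R (Hyy x (y + t *\<^sub>R d) - Hyy x y))"

definition JAx :: "(real^'n \<Rightarrow> real^'p \<Rightarrow> real^'p) \<Rightarrow> (real^'n \<Rightarrow> real^'p \<Rightarrow> real^'p^'p)
    \<Rightarrow> (real^'n \<Rightarrow> real^'p \<Rightarrow> real^'p^'n) \<Rightarrow> real^'n \<Rightarrow> real^'p \<Rightarrow> real^'p^'n" where
  "JAx Gy Hyy Hxy x y =
     - (Hxy x y ** matrix_inv (Hyy x y))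
     + D3xyy Hxy x y (matrix_inv (Hyy x y) *v Gy x y) ** matrix_inv (Hyy x y)"

definition JAy :: "(real^'n \<Rightarrow> real^'p \<Rightarrow> real^'p) \<Rightarrow> (real^'n \<Rightarrow> real^'p \<Rightarrow> real^'p^'p)
    \<Rightarrow> real^'n \<Rightarrow> real^'p \<Rightarrow> real^'p^'p" where
  "JAy Gy Hyy x y = D3yyy Hyy x y (matrix_inv (Hyy x y) *v Gy x y) ** matrix_inv (Hyy x y)"

text \<open>D_h(x,y) and hat D_h(x,y); Df is the conservative field D_f of f (curried).\<close>
definition Dh :: "real \<Rightarrow> (real^'n \<Rightarrow> real^'p \<Rightarrow> ((real^'n) \<times> (real^'p)) set)
    \<Rightarrow> (real^'n \<Rightarrow> real^'p \<Rightarrow> real^'p) \<Rightarrow> (real^'n \<Rightarrow> real^'p \<Rightarrow> real^'p^'p)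
    \<Rightarrow> (real^'n \<Rightarrow> real^'p \<Rightarrow> real^'p^'n) \<Rightarrow> real^'n \<Rightarrow> real^'p \<Rightarrow> ((real^'n) \<times> (real^'p)) set" where
  "Dh \<beta> Df Gy Hyy Hxy x y =
     (\<lambda>(dx, dy). (dx + JAx Gy Hyy Hxy x y *v dy + \<beta> *\<^sub>R (Hxy x y *v Gy x y),
                  JAy Gy Hyy x y *v dy + \<beta> *\<^sub>R (Hyy x y *v Gy x y)))
     ` Df x (A_map Gy Hyy x y)"

definition Dh_hat :: "real \<Rightarrow> (real^'n \<Rightarrow> real^'p \<Rightarrow> ((real^'n) \<times> (real^'p)) set)
    \<Rightarrow> (real^'n \<Rightarrow> real^'p \<Rightarrow> real^'p) \<Rightarrow> (real^'n \<Rightarrow> real^'p \<Rightarrow> real^'p^'p)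
    \<Rightarrow> (real^'n \<Rightarrow> real^'p \<Rightarrow> real^'p^'n) \<Rightarrow> real^'n \<Rightarrow> real^'p \<Rightarrow> ((real^'n) \<times> (real^'p)) set" where
  "Dh_hat \<beta> Df Gy Hyy Hxy x y =
     (\<lambda>(dx, dy). (dx - Hxy x y *v (matrix_inv (Hyy x y) *v dy - \<beta> *\<^sub>R Gy x y),
                  \<beta> *\<^sub>R Gy x y))
     ` Df x (A_map Gy Hyy x y)"

end

theory Submission
  imports Defs
begin

lemma dq_lim:
  fixes \<phi> :: "real \<Rightarrow> 'a::real_normed_vector"
  assumes "(\<phi> has_derivative \<phi>') (at 0)"
  shows "((\<lambda>t. (1/t) *\<^sub>R (\<phi> t - \<phi> 0)) \<longlongrightarrow> \<phi>' 1) (at 0)"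
proof -
  have bl: "bounded_linear \<phi>'" using assms has_derivative_bounded_linear by blast
  have lin: "\<phi>' t = t *\<^sub>R \<phi>' 1" for t
    using linear_cmul[OF bounded_linear.linear[OF bl], of t 1] by simp
  have "((\<lambda>y. (1 / norm (y - 0)) *\<^sub>R (\<phi> y - (\<phi> 0 + \<phi>' (y - 0)))) \<longlongrightarrow> 0) (at 0)"
    using assms has_derivative_at2 by blast
  from tendsto_norm_zero[OF this]
  have L: "((\<lambda>t. norm ((1 / norm t) *\<^sub>R (\<phi> t - (\<phi> 0 + \<phi>' t)))) \<longlongrightarrow> 0) (at 0)"
    by simp
  have eq: "norm ((1 / norm t) *\<^sub>R (\<phi> t - (\<phi> 0 + \<phi>' t))) = norm ((1/t) *\<^sub>R (\<phi> t - \<phi> 0) - \<phi>' 1)"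
    if "t \<noteq> 0" for t
  proof -
    have "(1/t) *\<^sub>R (\<phi> t - \<phi> 0) - \<phi>' 1 = (1/t) *\<^sub>R (\<phi> t - (\<phi> 0 + \<phi>' t))"
      using that by (simp add: lin[of t] algebra_simps)
    then show ?thesis using that by simp
  qed
  have ev: "\<forall>\<^sub>F t in at 0. norm ((1 / norm t) *\<^sub>R (\<phi> t - (\<phi> 0 + \<phi>' t))) = norm ((1/t) *\<^sub>R (\<phi> t - \<phi> 0) - \<phi>' 1)"
    unfolding eventually_at using eq by (intro exI[of _ 1]) auto
  have "((\<lambda>t. norm ((1/t) *\<^sub>R (\<phi> t - \<phi> 0) - \<phi>' 1)) \<longlongrightarrow> 0) (at 0)"
    by (rule Lim_transform_eventually[OF L ev])
  then have "((\<lambda>t. (1/t) *\<^sub>R (\<phi> t - \<phi> 0) - \<phi>' 1) \<longlongrightarrow> 0) (at 0)"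
    using tendsto_norm_zero_iff by blast
  then show ?thesis using Lim_null by blast
qed

lemma lin_mv: "bounded_linear (\<lambda>A::real^'p^'q. A *v z)"
proof -
  have "linear (\<lambda>A::real^'p^'q. A *v z)"
    by (rule linearI) (auto simp: vec_eq_iff matrix_vector_mult_def sum.distrib sum_distrib_left algebra_simps)
  then show ?thesis using linear_conv_bounded_linear by blast
qed

lemma neg_mv: "(- A) *v w = - (A *v (w::real^'a))" for A :: "real^'a^'b"
  by (simp add: matrix_vector_mult_def vec_eq_iff sum_negf)

lemma mat_norm_bound: "norm (M *v v) \<le> mat_norm M * norm v"
  unfolding mat_norm_def by (rule onorm) simp

lemma D3_zero:
  fixes K :: "real^'n \<Rightarrow> real^'p \<Rightarrow> real^'a^'b"
  shows "Lim (at (0::real)) (\<lambda>t. (1 / t) *\<^sub>R (K x (y + t *\<^sub>R 0) - K x y)) = 0"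
  by (simp add: tendsto_Lim[OF trivial_limit_at tendsto_const])

lemma D3_bound:
  fixes K :: "real^'n \<Rightarrow> real^'p \<Rightarrow> real^'a^'b"
  assumes deriv: "((\<lambda>z. K (fst z) (snd z)) has_derivative D') (at (x,y))"
    and lip: "\<And>a b a' b'. mat_norm (K a b - K a' b') \<le> Q * dist (a,b) (a',b')"
  shows "norm (Lim (at (0::real)) (\<lambda>t. (1 / t) *\<^sub>R (K x (y + t *\<^sub>R v) - K x y)) *v z)
           \<le> Q * norm v * norm z"
proof -
  define \<phi> where "\<phi> = (\<lambda>t::real. K x (y + t *\<^sub>R v))"
  have inner: "((\<lambda>t::real. (x, y + t *\<^sub>R v)) has_derivative (\<lambda>t. (0, t *\<^sub>R v))) (at 0)"
    by (auto intro!: derivative_eq_intros)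
  have deriv': "((\<lambda>z. K (fst z) (snd z)) has_derivative D') (at ((\<lambda>t::real. (x, y + t *\<^sub>R v)) 0))"
    using deriv by simp
  have "((\<lambda>z. K (fst z) (snd z)) \<circ> (\<lambda>t::real. (x, y + t *\<^sub>R v)) has_derivative D' \<circ> (\<lambda>t. (0, t *\<^sub>R v))) (at 0)"
    by (rule diff_chain_at[OF inner deriv'])
  then have "(\<phi> has_derivative D' \<circ> (\<lambda>t. (0, t *\<^sub>R v))) (at 0)"
    by (simp add: \<phi>_def o_def)
  from dq_lim[OF this]
  have lim: "((\<lambda>t. (1 / t) *\<^sub>R (K x (y + t *\<^sub>R v) - K x y)) \<longlongrightarrow> D' (0, v)) (at 0)"
    by (simp add: \<phi>_def)
  then have LimEq: "Lim (at (0::real)) (\<lambda>t. (1 / t) *\<^sub>R (K x (y + t *\<^sub>R v) - K x y)) = D' (0, v)"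
    by (rule tendsto_Lim[OF trivial_limit_at])
  have lim2: "((\<lambda>t. norm (((1 / t) *\<^sub>R (K x (y + t *\<^sub>R v) - K x y)) *v z)) \<longlongrightarrow> norm (D' (0, v) *v z)) (at 0)"
    by (intro tendsto_norm bounded_linear.tendsto[OF lin_mv] lim)
  have bnd: "norm (((1 / t) *\<^sub>R (K x (y + t *\<^sub>R v) - K x y)) *v z) \<le> Q * norm v * norm z"
    if "t \<noteq> 0" for t
  proof -
    have "((1 / t) *\<^sub>R (K x (y + t *\<^sub>R v) - K x y)) *v z = (1/t) *\<^sub>R ((K x (y + t *\<^sub>R v) - K x y) *v z)"
      by (simp add: scaleR_matrix_vector_assoc)
    then have "norm (((1 / t) *\<^sub>R (K x (y + t *\<^sub>R v) - K x y)) *v z)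
        = (1 / \<bar>t\<bar>) * norm ((K x (y + t *\<^sub>R v) - K x y) *v z)" by simp
    also have "\<dots> \<le> (1 / \<bar>t\<bar>) * (mat_norm (K x (y + t *\<^sub>R v) - K x y) * norm z)"
      by (intro mult_left_mono mat_norm_bound) auto
    also have "\<dots> \<le> (1 / \<bar>t\<bar>) * ((Q * dist (x, y + t *\<^sub>R v) (x, y)) * norm z)"
      by (intro mult_left_mono mult_right_mono lip) auto
    also have "dist (x, y + t *\<^sub>R v) (x, y) = \<bar>t\<bar> * norm v"
      by (simp add: dist_Pair_Pair dist_norm)
    also have "(1 / \<bar>t\<bar>) * ((Q * (\<bar>t\<bar> * norm v)) * norm z) = Q * norm v * norm z"
      using that by (simp add: field_simps)
    finally show ?thesis .
  qed
  have ev: "\<forall>\<^sub>F t in at (0::real). norm (((1 / t) *\<^sub>R (K x (y + t *\<^sub>R v) - K x y)) *v z) \<le> Q * norm v * norm z"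
    unfolding eventually_at using bnd by (intro exI[of _ 1]) auto
  have "norm (D' (0, v) *v z) \<le> Q * norm v * norm z"
    by (rule tendsto_upperbound[OF lim2 ev trivial_limit_at])
  then show ?thesis using LimEq by simp
qed

theorem proposition4p3:
  fixes f :: "real^'n \<Rightarrow> real^'p \<Rightarrow> real"
    and Df :: "real^'n \<Rightarrow> real^'p \<Rightarrow> ((real^'n) \<times> (real^'p)) set"
    and g :: "real^'n \<Rightarrow> real^'p \<Rightarrow> real"
    and Gx :: "real^'n \<Rightarrow> real^'p \<Rightarrow> real^'n"
    and Gy :: "real^'n \<Rightarrow> real^'p \<Rightarrow> real^'p"
    and Hyy :: "real^'n \<Rightarrow> real^'p \<Rightarrow> real^'p^'p"
    and Hxy :: "real^'n \<Rightarrow> real^'p \<Rightarrow> real^'p^'n"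
    and Mf \<mu> Lg Qg \<beta> :: real
    and x :: "real^'n" and y :: "real^'p"
  assumes consts_pos: "Mf > 0" "\<mu> > 0" "Lg > 0" "Qg > 0"
    and f_lip: "Mf-lipschitz_on UNIV (\<lambda>z. f (fst z) (snd z))"
    and g_grad: "\<And>a b. ((\<lambda>z. g (fst z) (snd z)) has_derivative
                     (\<lambda>h. Gx a b \<bullet> fst h + Gy a b \<bullet> snd h)) (at (a, b))"
    and Gy_deriv: "\<And>a b. ((\<lambda>z. Gy (fst z) (snd z)) has_derivative
                     (\<lambda>h. transpose (Hxy a b) *v fst h + Hyy a b *v snd h)) (at (a, b))"
    and Gx_diff: "\<And>a b. (\<lambda>z. Gx (fst z) (snd z)) differentiable (at (a, b))"
    and strongly_convex: "\<And>a b v. \<mu> * (v \<bullet> v) \<le> v \<bullet> (Hyy a b *v v)"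
    and grad_lip: "Lg-lipschitz_on UNIV (\<lambda>z. (Gx (fst z) (snd z), Gy (fst z) (snd z)))"
    and Hyy_lip: "\<And>a b a' b'. mat_norm (Hyy a b - Hyy a' b') \<le> Qg * dist (a, b) (a', b')"
    and Hxy_lip: "\<And>a b a' b'. mat_norm (Hxy a b - Hxy a' b') \<le> Qg * dist (a, b) (a', b')"
    and Hyy_C1: "\<exists>D :: (real^'n) \<times> (real^'p) \<Rightarrow> (((real^'n) \<times> (real^'p)) \<Rightarrow>\<^sub>L (real^'p^'p)).
                   (\<forall>z. ((\<lambda>z. Hyy (fst z) (snd z)) has_derivative blinfun_apply (D z)) (at z))
                   \<and> continuous_on UNIV D"
    and f_potential: "potential_of (\<lambda>z. f (fst z) (snd z)) (\<lambda>z. Df (fst z) (snd z))"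
    and Df_values: "\<And>a b. compact (Df a b) \<and> convex (Df a b) \<and> (\<forall>d\<in>Df a b. norm d \<le> Mf)"
    and beta: "\<beta> \<ge> 2 * Mf * Qg / \<mu> ^ 3"
  shows "0 \<in> Dh \<beta> Df Gy Hyy Hxy x y \<longleftrightarrow> 0 \<in> Dh_hat \<beta> Df Gy Hyy Hxy x y"
proof -
  let ?H = "Hyy x y"
  let ?Hi = "matrix_inv (Hyy x y)"
  have inj: "\<forall>u. ?H *v u = 0 \<longrightarrow> u = 0"
  proof (intro allI impI)
    fix u assume "?H *v u = 0"
    then have "\<mu> * (u \<bullet> u) \<le> 0" using strongly_convex[where a=x and b=y and v=u] by simp
    then have "u \<bullet> u \<le> 0" using consts_pos(2)
      by (simp add: mult_le_0_iff)
    then show "u = 0" by (metis inner_gt_zero_iff not_less)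
  qed
  then have "invertible ?H"
    using invertible_left_inverse matrix_left_invertible_ker by blast
  then have "?H ** ?Hi = mat 1 \<and> ?Hi ** ?H = mat 1"
    unfolding invertible_def matrix_inv_def by (rule someI_ex)
  then have HHi: "?H ** ?Hi = mat 1" and HiH: "?Hi ** ?H = mat 1" by auto
  have HHi_v: "?H *v (?Hi *v w) = w" for w
    by (simp add: matrix_vector_mul_assoc HHi)
  have HiH_v: "?Hi *v (?H *v w) = w" for w
    by (simp add: matrix_vector_mul_assoc HiH)
  have lowH: "\<mu> * norm u \<le> norm (?H *v u)" for u
  proof -
    have "\<mu> * (norm u)^2 = \<mu> * (u \<bullet> u)" by (simp add: power2_norm_eq_inner)
    also have "\<dots> \<le> u \<bullet> (?H *v u)" by (rule strongly_convex)
    also have "\<dots> \<le> norm u * norm (?H *v u)" by (rule norm_cauchy_schwarz)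
    finally have *: "\<mu> * (norm u)^2 \<le> norm u * norm (?H *v u)" .
    show ?thesis
    proof (cases "norm u = 0")
      case True then show ?thesis by simp
    next
      case False
      then have "norm u > 0" by simp
      with * show ?thesis by (simp add: power2_eq_square mult.assoc)
    qed
  qed
  have upHi: "norm (?Hi *v w) \<le> norm w / \<mu>" for w
    using lowH[of "?Hi *v w"] consts_pos(2) by (simp add: HHi_v field_simps)
  have bpos: "\<beta> > 0"
  proof -
    have "2 * Mf * Qg / \<mu> ^ 3 > 0" using consts_pos by simp
    then show ?thesis using beta by linarith
  qed
  have JAx0: "JAx Gy Hyy Hxy x y = - (Hxy x y ** ?Hi)" and JAy0: "JAy Gy Hyy x y = 0"
    if "Gy x y = 0"
  proof -
    have "D3xyy Hxy x y (?Hi *v Gy x y) = 0" unfolding D3xyy_def that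
      using D3_zero[where K=Hxy and x=x and y=y] by simp
    then show "JAx Gy Hyy Hxy x y = - (Hxy x y ** ?Hi)"
      unfolding JAx_def by (simp add: vec_eq_iff matrix_matrix_mult_def)
    have "D3yyy Hyy x y (?Hi *v Gy x y) = 0" unfolding D3yyy_def that
      using D3_zero[where K=Hyy and x=x and y=y] by simp
    then show "JAy Gy Hyy x y = 0"
      unfolding JAy_def by (simp add: vec_eq_iff matrix_matrix_mult_def)
  qed
  show ?thesis
  proof
    assume "0 \<in> Dh \<beta> Df Gy Hyy Hxy x y"
    then obtain dx dy where mem: "(dx, dy) \<in> Df x (A_map Gy Hyy x y)"
      and e1: "dx + JAx Gy Hyy Hxy x y *v dy + \<beta> *\<^sub>R (Hxy x y *v Gy x y) = 0"
      and e2: "JAy Gy Hyy x y *v dy + \<beta> *\<^sub>R (?H *v Gy x y) = 0"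
      unfolding Dh_def by (auto simp: zero_prod_def)
    have ndy: "norm dy \<le> Mf"
      using Df_values mem norm_snd_le[of dy dx] by (meson order_trans)
    define v where "v = ?Hi *v Gy x y"
    have Gv: "Gy x y = ?H *v v" by (simp add: v_def HHi_v)
    obtain DH where DH: "\<forall>z. ((\<lambda>z. Hyy (fst z) (snd z)) has_derivative blinfun_apply (DH z)) (at z)"
      using Hyy_C1 by blast
    have "JAy Gy Hyy x y *v dy = D3yyy Hyy x y v *v (?Hi *v dy)"
      unfolding JAy_def v_def by (simp add: matrix_vector_mul_assoc)
    then have "norm (JAy Gy Hyy x y *v dy) \<le> Qg * norm v * norm (?Hi *v dy)"
      unfolding D3yyy_def using D3_bound[OF DH[rule_format, of "(x,y)"] Hyy_lip] by simp
    also have "\<dots> \<le> Qg * norm v * (Mf / \<mu>)"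
      using upHi[of dy] ndy consts_pos
      by (intro mult_left_mono) (auto simp: divide_right_mono order_trans)
    finally have n1: "norm (JAy Gy Hyy x y *v dy) \<le> Qg * norm v * (Mf / \<mu>)" .
    have "\<mu> * (\<mu> * norm v) \<le> norm (?H *v (?H *v v))"
      using lowH[of v] lowH[of "?H *v v"] consts_pos(2) by (meson mult_left_mono less_imp_le order_trans)
    then have n2: "\<beta> * (\<mu> * (\<mu> * norm v)) \<le> norm (\<beta> *\<^sub>R (?H *v Gy x y))"
      using bpos Gv by (simp add: mult_left_mono)
    have "norm (\<beta> *\<^sub>R (?H *v Gy x y)) = norm (JAy Gy Hyy x y *v dy)"
      using e2 by (metis add_eq_0_iff norm_minus_cancel)
    with n1 n2 have key: "\<beta> * \<mu>^2 * norm v \<le> Qg * Mf * norm v / \<mu>"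
      by (simp add: power2_eq_square field_simps)
    have bb: "\<beta> * \<mu>^3 \<ge> 2 * Mf * Qg"
      using beta consts_pos(2) by (simp add: field_simps)
    have "norm v = 0"
    proof (rule ccontr)
      assume "norm v \<noteq> 0"
      then have nv: "norm v > 0" by simp
      from key have "\<beta> * \<mu>^2 * norm v * \<mu> \<le> Qg * Mf * norm v"
        using consts_pos(2) by (simp add: field_simps)
      then have "\<beta> * \<mu>^3 * norm v \<le> Qg * Mf * norm v"
        by (simp add: power3_eq_cube power2_eq_square mult_ac)
      with bb nv have "2 * Mf * Qg * norm v \<le> Qg * Mf * norm v"
        by (smt (verit) mult_right_mono)
      moreover have "0 < Mf * Qg * norm v" using consts_pos nv by simp
      moreover have "Qg * Mf * norm v = Mf * Qg * norm v" by (simp add: mult_ac)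
      ultimately show False by linarith
    qed
    then have G0: "Gy x y = 0" using Gv by simp
    have "dx - Hxy x y *v (?Hi *v dy) = 0"
      using e1 JAx0[OF G0] G0 by (simp add: matrix_vector_mul_assoc neg_mv)
    then show "0 \<in> Dh_hat \<beta> Df Gy Hyy Hxy x y"
      unfolding Dh_hat_def using mem G0
      by (auto simp: zero_prod_def image_iff intro!: bexI[of _ "(dx, dy)"])
  next
    assume "0 \<in> Dh_hat \<beta> Df Gy Hyy Hxy x y"
    then obtain dx dy where mem: "(dx, dy) \<in> Df x (A_map Gy Hyy x y)"
      and e1: "dx - Hxy x y *v (?Hi *v dy - \<beta> *\<^sub>R Gy x y) = 0"
      and e2: "\<beta> *\<^sub>R Gy x y = 0"
      unfolding Dh_hat_def by (auto simp: zero_prod_def)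
    have G0: "Gy x y = 0" using e2 bpos by simp
    have "dx + JAx Gy Hyy Hxy x y *v dy = 0"
      using e1 JAx0[OF G0] G0 by (simp add: matrix_vector_mul_assoc neg_mv)
    then show "0 \<in> Dh \<beta> Df Gy Hyy Hxy x y"
      unfolding Dh_def using mem G0 JAy0[OF G0]
      by (auto simp: zero_prod_def image_iff intro!: bexI[of _ "(dx, dy)"])
  qed
qed

end
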